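(* For all integers $k\ge3$ and $n\ge k$ there exist a connected unweighted graph $G$ on $n$ vertices, $k$ singleton groups $R_1=\{r_1\},\dots,R_k=\{r_k\}$ and a source vertex $s$ such that every spanning subgraph $H$ of $G$ satisfying $\sigma_H(s,t)\le\alpha\,\sigma_G(s,t)$ for all $t\in V$ with some $\alpha<2-\frac{2}{k}$ has at least $n$ edges.
   Context: Unweighted means every edge has weight $1$. Paths are walks; lengths count edge weights with multiplicity. A group Steiner path from $s$ to $t$ is a path from $s$ to $t$ containing at least one vertex of each group $R_i$; $\sigma_X(s,t)$ is the minimum length of such a path in graph $X$ (with $s=t$ allowed). *)

theory Defs
  imports Main "HOL-Library.Extended_Nat"
begin

text \<open>An undirected simple graph on vertex set V is given by a set of edges,
each edge being a 2-element subset of V. All edges have weight 1.\<close>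

definition simple_graph :: "'a set \<Rightarrow> 'a set set \<Rightarrow> bool" where
  "simple_graph V E \<longleftrightarrow> (\<forall>e\<in>E. e \<subseteq> V \<and> card e = 2)"

text \<open>A walk (path in the paper's sense, repetitions allowed) is a nonempty vertex
list in V whose consecutive vertices are adjacent; its length is the number of edges.\<close>

definition is_walk :: "'a set \<Rightarrow> 'a set set \<Rightarrow> 'a list \<Rightarrow> bool" where
  "is_walk V E xs \<longleftrightarrow> xs \<noteq> [] \<and> set xs \<subseteq> V \<and>
     (\<forall>i. Suc i < length xs \<longrightarrow> {xs ! i, xs ! Suc i} \<in> E)"

definition walk_len :: "'a list \<Rightarrow> nat" where
  "walk_len xs = length xs - 1"

definition connected_graph :: "'a set \<Rightarrow> 'a set set \<Rightarrow> bool" where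
  "connected_graph V E \<longleftrightarrow>
     (\<forall>u\<in>V. \<forall>v\<in>V. \<exists>xs. is_walk V E xs \<and> hd xs = u \<and> last xs = v)"

definition group_steiner_walk ::
  "'a set \<Rightarrow> 'a set set \<Rightarrow> nat \<Rightarrow> (nat \<Rightarrow> 'a set) \<Rightarrow> 'a \<Rightarrow> 'a \<Rightarrow> 'a list \<Rightarrow> bool" where
  "group_steiner_walk V E k R s t xs \<longleftrightarrow>
     is_walk V E xs \<and> hd xs = s \<and> last xs = t \<and> (\<forall>i<k. set xs \<inter> R i \<noteq> {})"

text \<open>sigma: minimum length of a group Steiner path (infinity if none exists).\<close>

definition gs_dist ::
  "'a set \<Rightarrow> 'a set set \<Rightarrow> nat \<Rightarrow> (nat \<Rightarrow> 'a set) \<Rightarrow> 'a \<Rightarrow> 'a \<Rightarrow> enat" where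
  "gs_dist V E k R s t = Inf {enat (walk_len xs) | xs. group_steiner_walk V E k R s t xs}"

end

theory Submission imports Defs begin

definition gE :: "nat \<Rightarrow> nat \<Rightarrow> nat set" where
  "gE k i = (if i < k then {i, Suc i mod k} else {0, i})"

lemma walk_snoc:
  assumes "is_walk V E xs" "{last xs, y} \<in> E" "y \<in> V"
  shows "is_walk V E (xs @ [y])"
  unfolding is_walk_def
proof (intro conjI allI impI)
  show "xs @ [y] \<noteq> []" by simp
  show "set (xs @ [y]) \<subseteq> V" using assms unfolding is_walk_def by auto
  fix i assume i: "Suc i < length (xs @ [y])"
  show "{(xs @ [y]) ! i, (xs @ [y]) ! Suc i} \<in> E"
  proof (cases "Suc i < length xs")
    case True then show ?thesis using assms(1) unfolding is_walk_def by (auto simp: nth_append)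
  next
    case False
    then have "i = length xs - 1" "xs \<noteq> []" using i assms(1) unfolding is_walk_def by auto
    then show ?thesis using assms(2) by (auto simp: nth_append last_conv_nth)
  qed
qed

lemma walk_lip:
  fixes f :: "'a \<Rightarrow> int"
  assumes "is_walk V H xs" "\<And>x y. {x,y} \<in> H \<Longrightarrow> \<bar>f x - f y\<bar> \<le> 1"
  shows "i \<le> j \<Longrightarrow> j < length xs \<Longrightarrow> \<bar>f (xs ! j) - f (xs ! i)\<bar> \<le> int (j - i)"
proof (induction j)
  case 0 then show ?case by simp
next
  case (Suc j)
  show ?case
  proof (cases "i = Suc j")
    case True then show ?thesis by simp
  next
    case False
    then have ij: "i \<le> j" using Suc by simp
    have "{xs ! j, xs ! Suc j} \<in> H" using assms(1) Suc.prems unfolding is_walk_def by auto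
    then have "\<bar>f (xs ! j) - f (xs ! Suc j)\<bar> \<le> 1" using assms(2) by blast
    moreover have "\<bar>f (xs ! j) - f (xs ! i)\<bar> \<le> int (j - i)" using Suc ij by simp
    ultimately show ?thesis using ij by simp
  qed
qed

lemma gs_fin:
  assumes "gs_dist V E k R s t \<noteq> \<infinity>"
  shows "\<exists>xs. group_steiner_walk V E k R s t xs"
  using assms unfolding gs_dist_def by (auto simp: top_enat_def[symmetric])

lemma gE_simple: assumes "k \<ge> 3" "k \<le> n" shows "simple_graph {..<n} (gE k ` {..<n})"
  unfolding simple_graph_def
proof
  fix e assume "e \<in> gE k ` {..<n}"
  then obtain i where i: "i < n" "e = gE k i" by auto
  show "e \<subseteq> {..<n} \<and> card e = 2"
  proof (cases "i < k")
    case True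
    have "Suc i mod k \<noteq> i"
      proof (cases "Suc i < k")
      case True then show ?thesis by simp
    next
      case False then have "Suc i = k" using \<open>i < k\<close> by simp
      then show ?thesis using assms(1) by auto
    qed
    moreover have "Suc i mod k < n" proof -
      have "Suc i mod k < k" using assms(1) by simp
      then show ?thesis using assms(2) by linarith
    qed
    ultimately show ?thesis using i True unfolding gE_def by auto
  next
    case False then show ?thesis using i assms unfolding gE_def by auto
  qed
qed

lemma suc_mod: "i < k \<Longrightarrow> Suc i mod k = (if Suc i = k then 0 else Suc i)"
  by auto

lemma gE_inj: assumes "k \<ge> 3" shows "inj_on (gE k) {..<n}"
proof (rule inj_onI)
  fix i j assume i: "i \<in> {..<n}" and j: "j \<in> {..<n}" and eq: "gE k i = gE k j"
  show "i = j"
  proof (cases "i < k")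
    case True note ik = True
    show ?thesis
    proof (cases "j < k")
      case True
      then have "{i, if Suc i = k then 0 else Suc i} = {j, if Suc j = k then 0 else Suc j}"
        using eq ik unfolding gE_def by (simp add: suc_mod)
      then show ?thesis using assms ik True by (auto simp: doubleton_eq_iff split: if_splits)
    next
      case False
      have "j \<in> gE k i" using eq False unfolding gE_def by simp
      moreover have "gE k i \<subseteq> {..<k}" using ik unfolding gE_def by auto
      ultimately show ?thesis using False by auto
    qed
  next
    case False note ik = False
    show ?thesis
    proof (cases "j < k")
      case True
      have "i \<in> gE k j" using eq[symmetric] ik unfolding gE_def by auto
      moreover have "gE k j \<subseteq> {..<k}" using True unfolding gE_def by auto
      ultimately show ?thesis using ik by auto
    next
      case False
      then show ?thesis using eq ik assms unfolding gE_def by (auto simp: doubleton_eq_iff)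
    qed
  qed
qed

lemma gE_card: assumes "k \<ge> 3" shows "card (gE k ` {..<n}) = n"
  using card_image[OF gE_inj[OF assms]] by simp

lemma rt_walk:
  assumes "(u, v) \<in> {(x,y). {x,y} \<in> E}\<^sup>*" "u \<in> V" "simple_graph V E"
  shows "\<exists>xs. is_walk V E xs \<and> hd xs = u \<and> last xs = v"
  using assms(1)
proof (induction rule: rtrancl_induct)
  case base
  then show ?case using assms(2) by (intro exI[of _ "[u]"]) (auto simp: is_walk_def)
next
  case (step y z)
  then obtain xs where xs: "is_walk V E xs" "hd xs = u" "last xs = y" by blast
  have "{y,z} \<in> E" using step by simp
  then have "z \<in> V" using assms(3) unfolding simple_graph_def by auto
  have "is_walk V E (xs @ [z])" using walk_snoc[OF xs(1)] xs \<open>{y,z} \<in> E\<close> \<open>z \<in> V\<close> by simp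
  moreover have "xs \<noteq> []" using xs(1) unfolding is_walk_def by simp
  ultimately show ?case using xs by (intro exI[of _ "xs @ [z]"]) auto
qed

lemma gE_conn: assumes "k \<ge> 3" "k \<le> n" shows "connected_graph {..<n} (gE k ` {..<n})"
proof -
  let ?E = "gE k ` {..<n}"
  let ?R = "{(x,y). {x,y} \<in> ?E}"
  have sym: "(x,y) \<in> ?R \<Longrightarrow> (y,x) \<in> ?R" for x y by (simp add: insert_commute)
  have symR: "?R\<inverse> = ?R" using sym by auto
  have low: "u < k \<Longrightarrow> (0,u) \<in> ?R\<^sup>*" for u
  proof (induction u)
    case 0 then show ?case by simp
  next
    case (Suc u)
    have "gE k u = {u, Suc u}" using Suc.prems unfolding gE_def by simp
    moreover have "u < n" using Suc.prems assms by simp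
    ultimately have "(u, Suc u) \<in> ?R" by (metis (mono_tags, lifting) case_prodI image_eqI lessThan_iff mem_Collect_eq)
    then show ?case using Suc by (meson Suc_lessD rtrancl.rtrancl_into_rtrancl)
  qed
  have all: "u < n \<Longrightarrow> (0,u) \<in> ?R\<^sup>*" for u
  proof (cases "u < k")
    case True then show ?thesis using low by simp
  next
    case False
    assume "u < n"
    then have "{0,u} \<in> ?E" using False unfolding gE_def by force
    then show ?thesis by auto
  qed
  have sg: "simple_graph {..<n} ?E" using gE_simple[OF assms] .
  show ?thesis unfolding connected_graph_def
  proof (intro ballI)
    fix u v assume u: "u \<in> {..<n}" and v: "v \<in> {..<n}"
    have "(0,u) \<in> ?R\<^sup>*" using all u by simp
    then have "(u,0) \<in> (?R\<inverse>)\<^sup>*" by (simp add: rtrancl_converse)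
    then have "(u,0) \<in> ?R\<^sup>*" using symR by simp
    moreover have "(0,v) \<in> ?R\<^sup>*" using all v by simp
    ultimately have "(u,v) \<in> ?R\<^sup>*" by simp
    then show "\<exists>xs. is_walk {..<n} ?E xs \<and> hd xs = u \<and> last xs = v"
      using rt_walk[OF _ u sg] by blast
  qed
qed

lemma G_bound: assumes "k \<ge> 3" "k \<le> n"
  shows "gs_dist {..<n} (gE k ` {..<n}) k (\<lambda>i. {i}) 0 0 \<le> enat k"
proof -
  let ?W = "[0..<k] @ [0]"
  have w: "is_walk {..<n} (gE k ` {..<n}) ?W"
    unfolding is_walk_def
  proof (intro conjI allI impI)
    show "?W \<noteq> []" by simp
    show "set ?W \<subseteq> {..<n}" using assms by auto
    fix i assume i: "Suc i < length ?W"
    show "{?W ! i, ?W ! Suc i} \<in> gE k ` {..<n}"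
    proof (cases "Suc i < k")
      case True
      then have "{?W ! i, ?W ! Suc i} = gE k i" unfolding gE_def by (simp add: nth_append)
      then show ?thesis using True assms by auto
    next
      case False
      then have "Suc i = k" using i by simp
      then have "{?W ! i, ?W ! Suc i} = gE k i" unfolding gE_def by (simp add: nth_append)
      then show ?thesis using \<open>Suc i = k\<close> assms by auto
    qed
  qed
  have "group_steiner_walk {..<n} (gE k ` {..<n}) k (\<lambda>i. {i}) 0 0 ?W"
    unfolding group_steiner_walk_def using w assms by auto
  moreover have "walk_len ?W = k" unfolding walk_len_def by simp
  ultimately show ?thesis unfolding gs_dist_def by (metis (mono_tags, lifting) Inf_lower mem_Collect_eq)
qed

lemma pendant: assumes "H \<subseteq> gE k ` {..<n}" "gs_dist {..<n} H k R 0 i \<noteq> \<infinity>" "k \<le> i" "i < n" "k \<ge> 3"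
  shows "gE k i \<in> H"
proof -
  obtain xs where xs: "group_steiner_walk {..<n} H k R 0 i xs" using gs_fin[OF assms(2)] by blast
  then have w: "is_walk {..<n} H xs" "hd xs = 0" "last xs = i" unfolding group_steiner_walk_def by auto
  have ne: "xs \<noteq> []" using w unfolding is_walk_def by simp
  have "length xs \<ge> 2"
  proof (rule ccontr)
    assume "\<not> length xs \<ge> 2"
    then have "length xs = 1" using ne by (cases xs) (auto simp: not_le)
    then have "hd xs = last xs" by (cases xs) auto
    then show False using w assms by simp
  qed
  define m where "m = length xs - 2"
  have "Suc m < length xs" using \<open>length xs \<ge> 2\<close> unfolding m_def by simp
  then have e: "{xs ! m, xs ! Suc m} \<in> H" using w unfolding is_walk_def by blast
  have "Suc m = length xs - 1" using \<open>length xs \<ge> 2\<close> unfolding m_def by simp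
  then have "xs ! Suc m = i" using w(3) ne by (simp add: last_conv_nth)
  then have "{xs ! m, i} \<in> gE k ` {..<n}" using e assms(1) by auto
  then obtain j where j: "j < n" "{xs ! m, i} = gE k j" by auto
  have "j = i"
  proof (cases "j < k")
    case True
    then have "i \<in> {j, Suc j mod k}" using j unfolding gE_def by auto
    moreover have "Suc j mod k < k" using assms by simp
    ultimately show ?thesis using True assms by auto
  next
    case False
    then have "i \<in> {0, j}" using j unfolding gE_def by auto
    then show ?thesis using assms by auto
  qed
  then show ?thesis using e j \<open>xs ! Suc m = i\<close> by simp
qed

lemma cyc: assumes "k \<ge> 3" "k \<le> n" "H \<subseteq> gE k ` {..<n}" "a < k" "gE k a \<notin> H"
   "group_steiner_walk {..<n} H k (\<lambda>i. {i}) 0 0 xs"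
  shows "walk_len xs \<ge> 2*k-2"
proof -
  define f :: "nat \<Rightarrow> int" where "f v = (if v<k then (if a < v then int v - a - 1 else int v + k - a - 1) else int k - a - 1)" for v
  have lip: "\<bar>f x - f y\<bar> \<le> 1" if xyH: "{x,y} \<in> H" for x y
  proof -
    have "{x,y} \<in> gE k ` {..<n}" using xyH assms(3) by auto
    then obtain j where j: "j < n" "{x,y} = gE k j" by auto
    have "j \<noteq> a" using xyH j assms(5) by auto
    show ?thesis
    proof (cases "j < k")
      case True
      then have xy: "{x,y} = {j, if Suc j = k then 0 else Suc j}" using j unfolding gE_def by (simp add: suc_mod)
      have "\<bar>f j - f (if Suc j = k then 0 else Suc j)\<bar> \<le> 1"
        using True \<open>j \<noteq> a\<close> assms(4) unfolding f_def by auto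
      then show ?thesis using xy by (auto simp: doubleton_eq_iff abs_minus_commute)
    next
      case False
      then have "{x,y} = {0, j}" using j unfolding gE_def by simp
      then show ?thesis using False assms unfolding f_def by (auto simp: doubleton_eq_iff)
    qed
  qed
  have w: "is_walk {..<n} H xs" "hd xs = 0" "last xs = 0" "\<forall>i<k. i \<in> set xs"
    using assms(6) unfolding group_steiner_walk_def by auto
  have ne: "xs \<noteq> []" using w unfolding is_walk_def by simp
  define b where "b = Suc a mod k"
  have "b < k" using assms unfolding b_def by simp
  obtain p where p: "p < length xs" "xs ! p = a" using w(4) assms(4) by (metis in_set_conv_nth)
  obtain q where q: "q < length xs" "xs ! q = b" using w(4) \<open>b < k\<close> by (metis in_set_conv_nth)
  define L where "L = length xs - 1"
  have x0: "xs ! 0 = 0" using w(2) ne by (simp add: hd_conv_nth)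
  have xL: "xs ! L = 0" using w(3) ne unfolding L_def by (simp add: last_conv_nth)
  have pL: "p \<le> L" "q \<le> L" "L < length xs" using p q ne unfolding L_def by auto
  have fa: "f a = int k - 1" unfolding f_def using assms by simp
  have fb: "f b = 0" unfolding f_def b_def using assms by (auto simp: suc_mod)
  have f0: "f 0 = int k - a - 1" unfolding f_def using assms by simp
  note WL = walk_lip[OF w(1) lip]
  have "int L \<ge> 2 * int k - 2"
  proof (cases "p \<le> q")
    case True
    have "\<bar>f (xs ! p) - f (xs ! 0)\<bar> \<le> int (p - 0)" by (rule WL) (use pL True in auto)
    moreover have "\<bar>f (xs ! q) - f (xs ! p)\<bar> \<le> int (q - p)" by (rule WL) (use pL True in auto)
    moreover have "\<bar>f (xs ! L) - f (xs ! q)\<bar> \<le> int (L - q)" by (rule WL) (use pL True in auto)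
    ultimately show ?thesis using p q x0 xL fa fb f0 True pL assms(4) by auto
  next
    case False
    have "\<bar>f (xs ! q) - f (xs ! 0)\<bar> \<le> int (q - 0)" by (rule WL) (use pL False in auto)
    moreover have "\<bar>f (xs ! p) - f (xs ! q)\<bar> \<le> int (p - q)" by (rule WL) (use pL False in auto)
    moreover have "\<bar>f (xs ! L) - f (xs ! p)\<bar> \<le> int (L - p)" by (rule WL) (use pL False in auto)
    ultimately show ?thesis using p q x0 xL fa fb f0 False pL assms(4) by auto
  qed
  then show ?thesis unfolding walk_len_def L_def by linarith
qed

theorem mainTheorem12:
  fixes k n :: nat
  assumes "k \<ge> 3" and "n \<ge> k"
  shows "\<exists>(E :: nat set set) (r :: nat \<Rightarrow> nat) (s :: nat).
     simple_graph {..<n} E \<and> connected_graph {..<n} E \<and>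
     (\<forall>i<k. r i \<in> {..<n}) \<and> s \<in> {..<n} \<and>
     (\<forall>H (\<alpha> :: real). H \<subseteq> E \<and> \<alpha> < 2 - 2 / real k \<and>
        (\<forall>t\<in>{..<n}. gs_dist {..<n} H k (\<lambda>i. {r i}) s t \<noteq> \<infinity> \<and>
            real (the_enat (gs_dist {..<n} H k (\<lambda>i. {r i}) s t))
              \<le> \<alpha> * real (the_enat (gs_dist {..<n} E k (\<lambda>i. {r i}) s t)))
        \<longrightarrow> card H \<ge> n)"
proof (rule exI[of _ "gE k ` {..<n}"], rule exI[of _ "\<lambda>i. i"], rule exI[of _ 0], intro conjI)
  let ?E = "gE k ` {..<n}"
  show "simple_graph {..<n} ?E" using gE_simple assms by simp
  show "connected_graph {..<n} ?E" using gE_conn assms by simp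
  show "\<forall>i<k. (\<lambda>i. i) i \<in> {..<n}" using assms by auto
  show "(0::nat) \<in> {..<n}" using assms by auto
  show "\<forall>H (\<alpha> :: real). H \<subseteq> ?E \<and> \<alpha> < 2 - 2 / real k \<and>
        (\<forall>t\<in>{..<n}. gs_dist {..<n} H k (\<lambda>i. {(\<lambda>i. i) i}) 0 t \<noteq> \<infinity> \<and>
            real (the_enat (gs_dist {..<n} H k (\<lambda>i. {(\<lambda>i. i) i}) 0 t))
              \<le> \<alpha> * real (the_enat (gs_dist {..<n} ?E k (\<lambda>i. {(\<lambda>i. i) i}) 0 t)))
        \<longrightarrow> card H \<ge> n"
  proof (intro allI impI)
  fix H and \<alpha> :: real
  assume A: "H \<subseteq> ?E \<and> \<alpha> < 2 - 2 / real k \<and>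
        (\<forall>t\<in>{..<n}. gs_dist {..<n} H k (\<lambda>i. {(\<lambda>i. i) i}) 0 t \<noteq> \<infinity> \<and>
            real (the_enat (gs_dist {..<n} H k (\<lambda>i. {(\<lambda>i. i) i}) 0 t))
              \<le> \<alpha> * real (the_enat (gs_dist {..<n} ?E k (\<lambda>i. {(\<lambda>i. i) i}) 0 t)))"
  then have HE: "H \<subseteq> ?E" and al: "\<alpha> < 2 - 2 / real k"
    and C: "\<And>t. t < n \<Longrightarrow> gs_dist {..<n} H k (\<lambda>i. {i}) 0 t \<noteq> \<infinity> \<and>
            real (the_enat (gs_dist {..<n} H k (\<lambda>i. {i}) 0 t))
              \<le> \<alpha> * real (the_enat (gs_dist {..<n} ?E k (\<lambda>i. {i}) 0 t))" by auto
  have "?E \<subseteq> H"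
  proof
    fix e assume "e \<in> ?E"
    then obtain i where i: "i < n" "e = gE k i" by auto
    show "e \<in> H"
    proof (cases "k \<le> i")
      case True
      then show ?thesis using pendant[OF HE _ True i(1) assms(1)] C[OF i(1)] i by blast
    next
      case False
      show ?thesis
      proof (rule ccontr)
        assume nH: "e \<notin> H"
        have n0: "0 < n" using assms by simp
        note c0 = C[OF n0]
        define sH where "sH = gs_dist {..<n} H k (\<lambda>i. {i}) 0 0"
        define sG where "sG = gs_dist {..<n} ?E k (\<lambda>i. {i}) 0 0"
        have sGk: "sG \<le> enat k" unfolding sG_def using G_bound assms by simp
        then obtain g where g: "sG = enat g" "g \<le> k" by (cases sG) auto
        have "sH \<ge> enat (2*k-2)" unfolding sH_def gs_dist_def
          using cyc[OF assms(1) assms(2) HE, of i] False nH i by (auto intro!: Inf_greatest)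
        moreover have "sH \<noteq> \<infinity>" using c0 unfolding sH_def by simp
        ultimately obtain h where h: "sH = enat h" "h \<ge> 2*k-2" by (cases sH) auto
        have le: "real h \<le> \<alpha> * real g" using c0 h g unfolding sH_def sG_def by simp
        have "\<alpha> * real g < 2 * real k - 2"
        proof (cases "\<alpha> \<le> 0")
          case True
          then have "\<alpha> * real g \<le> 0" by (simp add: mult_nonpos_nonneg)
          then show ?thesis using assms by simp
        next
          case False
          then have "\<alpha> * real g \<le> \<alpha> * real k" using g by simp
          also have "\<dots> < (2 - 2 / real k) * real k" using al assms by simp
          also have "\<dots> = 2 * real k - 2" using assms by (simp add: field_simps)
          finally show ?thesis .
        qed
        moreover have "real h \<ge> 2 * real k - 2" using h assms by linarith
        ultimately show False using le by simp
      qed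
    qed
  qed
  then have "H = ?E" using HE by blast
  then show "card H \<ge> n" using gE_card assms by simp
  qed
qed

end
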